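(* Let $x_1, \ldots, x_q \in \mathbb{C}$ and let $r$ be an integer with $1 \leqslant r < q$. Then $$\sum_{s=1}^q (-1)^{s-1} \sum_{1 \leqslant k_1 < \cdots < k_s \leqslant q}\ \sum_{\substack{j_{k_1}, \ldots, j_{k_s} \geqslant 0\\ j_{k_1} + \cdots + j_{k_s} = r}} \binom{2r}{2j_{k_1}, \ldots, 2j_{k_s}} x_{k_1}^{j_{k_1}} \cdots x_{k_s}^{j_{k_s}} = 0,$$ where $\binom{2r}{2j_{k_1}, \ldots, 2j_{k_s}} = \frac{(2r)!}{(2j_{k_1})! \cdots (2j_{k_s})!}$ and the $j$'s are integers. *)

theory Defs
  imports Complex_Main
begin

definition multinom2 :: "nat \<Rightarrow> nat set \<Rightarrow> (nat \<Rightarrow> nat) \<Rightarrow> nat" where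
  "multinom2 r K j = fact (2 * r) div (\<Prod>k\<in>K. fact (2 * j k))"

text \<open>Tuples (j_k)_{k in K} of nonnegative integers with sum r, represented as
  functions vanishing outside K.\<close>
definition comps :: "nat set \<Rightarrow> nat \<Rightarrow> (nat \<Rightarrow> nat) set" where
  "comps K r = {j. (\<forall>k. k \<notin> K \<longrightarrow> j k = 0) \<and> (\<Sum>k\<in>K. j k) = r}"

end

theory Submission
  imports Defs "HOL-Library.FuncSet"
begin

lemma alt_zero:
  assumes "finite S" "U \<subset> S"
  shows "(\<Sum>T | T \<subseteq> S \<and> U \<subseteq> T. (-1::complex) ^ card T) = 0"
proof -
  have fin: "finite {T. T \<subseteq> S \<and> U \<subseteq> T}" using assms(1) by auto
  have "card {T \<in> {T. T \<subseteq> S \<and> U \<subseteq> T}. even (card T)} = card {T \<in> {T. T \<subseteq> S \<and> U \<subseteq> T}. odd (card T)}"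
    using card_subsupersets_even_odd[OF assms] by simp
  from sum_alternating_cancels[OF fin this] show ?thesis by simp
qed

lemma finite_comps:
  assumes "finite A"
  shows "finite (comps A r)"
proof -
  have "comps A r \<subseteq> (\<lambda>g k. if k \<in> A then g k else 0) ` (PiE A (\<lambda>_. {0..r}))"
  proof
    fix j assume j: "j \<in> comps A r"
    hence z: "\<And>k. k \<notin> A \<Longrightarrow> j k = 0" and s: "(\<Sum>k\<in>A. j k) = r" by (auto simp: comps_def)
    have le: "j k \<le> r" if "k \<in> A" for k
      using member_le_sum[of k A j] that assms s by auto
    have "j = (\<lambda>k. if k \<in> A then (restrict j A) k else 0)" using z by (simp add: fun_eq_iff)
    moreover have "restrict j A \<in> PiE A (\<lambda>_. {0..r})" using le by (simp add: restrict_PiE_iff)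
    ultimately show "j \<in> (\<lambda>g k. if k \<in> A then g k else 0) ` (PiE A (\<lambda>_. {0..r}))" by blast
  qed
  moreover have "finite (PiE A (\<lambda>_. {0..r::nat}))" using assms by (simp add: finite_PiE)
  ultimately show ?thesis using finite_subset by blast
qed

theorem lemma1:
  fixes x :: "nat \<Rightarrow> complex" and q r :: nat
  assumes "1 \<le> r" and "r < q"
  shows "(\<Sum>s=1..q. (-1) ^ (s - 1) *
            (\<Sum>K\<in>{K. K \<subseteq> {1..q} \<and> card K = s}.
               (\<Sum>j\<in>comps K r.
                  of_nat (multinom2 r K j) * (\<Prod>k\<in>K. x k ^ j k)))) = 0"
proof -
  define A where "A = {1..q}"
  have finA: "finite A" by (simp add: A_def)
  define f where "f K = (\<Sum>j\<in>comps K r. of_nat (multinom2 r K j) * (\<Prod>k\<in>K. x k ^ j k))" for K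
  define t where "t j = of_nat (multinom2 r A j) * (\<Prod>k\<in>A. x k ^ j k)" for j
  have ft: "f K = (\<Sum>j\<in>comps K r. t j)" if "K \<subseteq> A" for K
    unfolding f_def
  proof (rule sum.cong[OF refl])
    fix j assume "j \<in> comps K r"
    hence z: "\<And>k. k \<notin> K \<Longrightarrow> j k = 0" by (auto simp: comps_def)
    have "(\<Prod>k\<in>K. fact (2 * j k)) = (\<Prod>k\<in>A. (fact (2 * j k)::nat))"
      by (rule prod.mono_neutral_left) (use finA that z in auto)
    moreover have "(\<Prod>k\<in>K. x k ^ j k) = (\<Prod>k\<in>A. x k ^ j k)"
      by (rule prod.mono_neutral_left) (use finA that z in auto)
    ultimately show "of_nat (multinom2 r K j) * (\<Prod>k\<in>K. x k ^ j k) = t j"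
      by (simp add: t_def multinom2_def)
  qed
  have step1: "(\<Sum>s=1..q. (-1) ^ (s - 1) * (\<Sum>K\<in>{K. K \<subseteq> {1..q} \<and> card K = s}. f K))
      = (\<Sum>K\<in>Pow A - {{}}. (-1) ^ (card K - 1) * f K)"
  proof -
    have "(\<Sum>K\<in>Pow A - {{}}. (-1) ^ (card K - 1) * f K)
       = (\<Sum>s\<in>{1..q}. \<Sum>K\<in>{K \<in> Pow A - {{}}. card K = s}. (-1) ^ (card K - 1) * f K)"
    proof (rule sum.group[symmetric])
      show "finite (Pow A - {{}})" using finA by simp
      show "card ` (Pow A - {{}}) \<subseteq> {1..q}"
      proof
        fix s assume "s \<in> card ` (Pow A - {{}})"
        then obtain K where "K \<subseteq> A" "K \<noteq> {}" "s = card K" by auto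
        moreover have "finite K" using \<open>K \<subseteq> A\<close> finA finite_subset by blast
        moreover have "card K \<le> card A" using \<open>K \<subseteq> A\<close> finA by (simp add: card_mono)
        ultimately show "s \<in> {1..q}" by (auto simp: A_def card_gt_0_iff Suc_le_eq)
      qed
    qed simp
    also have "\<dots> = (\<Sum>s=1..q. (-1) ^ (s - 1) * (\<Sum>K\<in>{K. K \<subseteq> {1..q} \<and> card K = s}. f K))"
    proof (rule sum.cong[OF refl])
      fix s assume s: "s \<in> {1..q}"
      have "{K \<in> Pow A - {{}}. card K = s} = {K. K \<subseteq> {1..q} \<and> card K = s}"
        using s by (auto simp: A_def)
      thus "(\<Sum>K\<in>{K \<in> Pow A - {{}}. card K = s}. (-1) ^ (card K - 1) * f K)
          = (-1) ^ (s - 1) * (\<Sum>K\<in>{K. K \<subseteq> {1..q} \<and> card K = s}. f K)"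
        by (simp add: sum_distrib_left)
    qed
    finally show ?thesis by simp
  qed
  have step2: "(\<Sum>K\<in>Pow A - {{}}. (-1) ^ (card K - 1) * f K)
      = (\<Sum>K\<in>Pow A - {{}}. \<Sum>j\<in>{j \<in> comps A r. j \<in> comps K r}. (-1) ^ (card K - 1) * t j)"
  proof (rule sum.cong[OF refl])
    fix K assume K: "K \<in> Pow A - {{}}"
    have "comps K r = {j \<in> comps A r. j \<in> comps K r}"
    proof -
      have "comps K r \<subseteq> comps A r"
      proof
        fix j assume "j \<in> comps K r"
        hence z: "\<And>k. k \<notin> K \<Longrightarrow> j k = 0" and s: "(\<Sum>k\<in>K. j k) = r" by (auto simp: comps_def)
        have "(\<Sum>k\<in>K. j k) = (\<Sum>k\<in>A. j k)"
          by (rule sum.mono_neutral_left) (use finA K z in auto)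
        moreover have "\<forall>k. k \<notin> A \<longrightarrow> j k = 0" using z K by blast
        ultimately show "j \<in> comps A r" using s by (auto simp: comps_def)
      qed
      thus ?thesis by auto
    qed
    thus "(-1) ^ (card K - 1) * f K = (\<Sum>j\<in>{j \<in> comps A r. j \<in> comps K r}. (-1) ^ (card K - 1) * t j)"
      using ft[of K] K by (simp add: sum_distrib_left)
  qed
  have step3: "\<dots> = (\<Sum>j\<in>comps A r. \<Sum>K\<in>{K \<in> Pow A - {{}}. j \<in> comps K r}. (-1) ^ (card K - 1) * t j)"
    by (rule sum.swap_restrict) (use finA finite_comps in auto)
  have step4: "(\<Sum>K\<in>{K \<in> Pow A - {{}}. j \<in> comps K r}. (-1) ^ (card K - 1) * t j) = 0"
    if j: "j \<in> comps A r" for j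
  proof -
    define U where "U = {k \<in> A. j k \<noteq> 0}"
    have z: "\<And>k. k \<notin> A \<Longrightarrow> j k = 0" and s: "(\<Sum>k\<in>A. j k) = r" using j by (auto simp: comps_def)
    have UA: "U \<subseteq> A" by (auto simp: U_def)
    have finU: "finite U" using UA finA finite_subset by blast
    have sU: "(\<Sum>k\<in>U. j k) = r"
    proof -
      have "(\<Sum>k\<in>U. j k) = (\<Sum>k\<in>A. j k)"
        by (rule sum.mono_neutral_left) (use finA UA in \<open>auto simp: U_def\<close>)
      thus ?thesis using s by simp
    qed
    have "U \<noteq> {}" using sU assms(1) by auto
    have "card U \<le> (\<Sum>k\<in>U. j k)"
      using sum_mono[of U "\<lambda>_. 1::nat" j] by (auto simp: U_def)
    hence "card U < card A" using sU assms(2) by (simp add: A_def)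
    hence "U \<noteq> A" by auto
    hence UsA: "U \<subset> A" using UA by auto
    have eqset: "{K \<in> Pow A - {{}}. j \<in> comps K r} = {K. K \<subseteq> A \<and> U \<subseteq> K}"
    proof (intro set_eqI iffI)
      fix K assume "K \<in> {K \<in> Pow A - {{}}. j \<in> comps K r}"
      hence "K \<subseteq> A" "\<And>k. k \<notin> K \<Longrightarrow> j k = 0" by (auto simp: comps_def)
      moreover have "U \<subseteq> K"
      proof
        fix k assume "k \<in> U"
        hence "j k \<noteq> 0" by (simp add: U_def)
        thus "k \<in> K" using calculation(2) by (cases "k \<in> K") auto
      qed
      ultimately show "K \<in> {K. K \<subseteq> A \<and> U \<subseteq> K}" by auto
    next
      fix K assume K: "K \<in> {K. K \<subseteq> A \<and> U \<subseteq> K}"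
      hence "(\<Sum>k\<in>K. j k) = (\<Sum>k\<in>A. j k)"
        by (intro sum.mono_neutral_left) (use finA in \<open>auto simp: U_def\<close>)
      moreover have "j k = 0" if "k \<notin> K" for k
      proof (cases "k \<in> A")
        case True
        then show ?thesis using K that unfolding U_def by blast
      next
        case False
        then show ?thesis using z by blast
      qed
      ultimately show "K \<in> {K \<in> Pow A - {{}}. j \<in> comps K r}"
        using K s \<open>U \<noteq> {}\<close> by (auto simp: comps_def)
    qed
    have "(\<Sum>K\<in>{K. K \<subseteq> A \<and> U \<subseteq> K}. (-1) ^ (card K - 1) * t j)
        = (\<Sum>K\<in>{K. K \<subseteq> A \<and> U \<subseteq> K}. - ((-1) ^ card K * t j))"
    proof (rule sum.cong[OF refl])
      fix K assume K: "K \<in> {K. K \<subseteq> A \<and> U \<subseteq> K}"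
      hence "finite K" using finA finite_subset by auto
      hence "card K \<noteq> 0" using K \<open>U \<noteq> {}\<close> by auto
      then obtain m where "card K = Suc m" using not0_implies_Suc by blast
      thus "(-1) ^ (card K - 1) * t j = - ((-1) ^ card K * t j)" by simp
    qed
    also have "\<dots> = - ((\<Sum>K\<in>{K. K \<subseteq> A \<and> U \<subseteq> K}. (-1::complex) ^ card K) * t j)"
      by (simp add: sum_negf sum_distrib_right)
    also have "\<dots> = 0" using alt_zero[OF finA UsA] by simp
    finally show ?thesis using eqset by simp
  qed
  have "(\<Sum>s=1..q. (-1) ^ (s - 1) * (\<Sum>K\<in>{K. K \<subseteq> {1..q} \<and> card K = s}. f K)) = 0"
    using step1 step2 step3 step4 by simp
  thus ?thesis by (simp add: f_def)
qed

end
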